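(* Let $i\ge 2$ be an integer and let $C(i)$, $B(i)$ be as defined in the context. (a) $C(i)$ is an $\mathbb{F}$-linear $[2i,2i-1,1]$-code which is $(2i-1)$-bounded relative to the ordered basis $B(i)$. (b) Let $j$ be an integer with $1\le j\le 4i^2-6i+1$. Then ${\sf Code}(B(i),j)$ is an $\mathbb{F}$-linear $[n_j,k_j,d_j]$-code which is $u_j$-bounded relative to the ordered basis ${\sf Basis}(B(i),j)$, where \[ n_j=2i\prod_{\ell=1}^{j}(2i-1+\ell),\quad k_j=2i-1+j,\quad d_j=\prod_{\ell=1}^{j}(2i-1+\ell),\quad u_j=(2i-1)\prod_{\ell=1}^{j}(2i-2+\ell). \]
   Context: $\mathbb{F}$ is an arbitrary field and vectors in $\mathbb{F}^n$ are column vectors. The weight $\mathrm{wt}(x)$ of $x\in\mathbb{F}^n$ is its number of nonzero coordinates. An $[n,k,d]$-code is a $k$-dimensional subspace of $\mathbb{F}^n$ whose minimum distance (the minimum weight of a nonzero codeword) is $d$. Boundedness: let $u$ be a positive integer and let $C$ be an $[n,k,d]$-code with ordered basis $B=(a_1,\dots,a_k)$. Then $C$ is $u$-bounded relative to $B$ if all three of the following hold: (i) $\mathrm{wt}(a_j)=u$ for every $j$; (ii) $\mathrm{wt}\big(\sum_{j=1}^k a_j\big)=d$; (iii) $u\ge d(1+k^{-1})$. Construction: for an ordered basis $B=(a_1,\dots,a_k)$ of a code $C\le\mathbb{F}^n$, set $a_0:=0\in\mathbb{F}^n$. For $m=1,\dots,k+1$, let $a'_m\in\mathbb{F}^{n(k+1)}$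 be the column vector made of $k+1$ blocks of length $n$. Its $r$-th block, for $r=1,\dots,k+1$, is $a_{r-m}$, where the subscript is read modulo $k+1$ with representatives in $\{0,\dots,k\}$. Thus $a'_1=(0,a_1,\dots,a_k)^T$, $a'_2=(a_k,0,a_1,\dots,a_{k-1})^T$, …, $a'_{k+1}=(a_1,\dots,a_k,0)^T$ in block form. Define ${\sf Basis}(B)=(a'_1,\dots,a'_{k+1})$, and let ${\sf Code}(B)\le\mathbb{F}^{n(k+1)}$ be its $\mathbb{F}$-linear span. Iteration: ${\sf Code}(B,1)={\sf Code}(B)$ and ${\sf Basis}(B,1)={\sf Basis}(B)$. For $i\ge2$, ${\sf Code}(B,i)={\sf Code}({\sf Basis}(B,i-1))$ and ${\sf Basis}(B,i)={\sf Basis}({\sf Basis}(B,i-1))$. Matrices: $\mathcal{A}_1=\begin{bmatrix}0&-1\\1&0\end{bmatrix}$ and $\mathcal{B}_1=\begin{bmatrix}1&-1\\-1&1\end{bmatrix}$. Recursively, for $i\ge1$, $\mathcal{A}_{i+1}=\begin{bmatrix}\mathcal{A}_1&\mathcal{B}_i\\-\mathcal{B}_i^T&\mathcal{A}_i\end{bmatrix}$ and $\mathcal{B}_{i+1}=[\mathcal{B}_1\ \mathcal{B}_i]$, as block matrices over $\mathbb{F}$. Thus $\mathcal{A}_i\in\mathbb{F}^{2i\times 2i}$. Codes $C(i)$: write $\mathcal{A}_i=[a_1,\dots,a_{2i}]$ by columns. Then $B(i)=(a_1,\dots,a_{2i-1})$, and $C(i)\le\mathbb{F}^{2i}$ is the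 $\mathbb{F}$-linear span of $B(i)$. The columns of $\mathcal{A}_i$ are linearly independent, so $B(i)$ is an ordered basis of $C(i)$. *)

theory Defs
  imports Complex_Main
begin

definition zero_vec :: "nat \<Rightarrow> 'a::field list" where
  "zero_vec n = replicate n 0"

definition wt :: "'a::field list \<Rightarrow> nat" where
  "wt v = length (filter (\<lambda>x. x \<noteq> 0) v)"

definition lincomb :: "nat \<Rightarrow> (nat \<Rightarrow> 'a::field) \<Rightarrow> 'a list list \<Rightarrow> 'a list" where
  "lincomb n c vs = map (\<lambda>r. \<Sum>j<length vs. c j * (vs ! j) ! r) [0..<n]"

definition span_vecs :: "nat \<Rightarrow> 'a::field list list \<Rightarrow> 'a list set" where
  "span_vecs n vs = range (\<lambda>c. lincomb n c vs)"

definition lin_indep_vecs :: "nat \<Rightarrow> 'a::field list list \<Rightarrow> bool" where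
  "lin_indep_vecs n vs \<longleftrightarrow>
     (\<forall>c. lincomb n c vs = zero_vec n \<longrightarrow> (\<forall>j<length vs. c j = 0))"

definition is_basis :: "nat \<Rightarrow> 'a::field list set \<Rightarrow> 'a list list \<Rightarrow> bool" where
  "is_basis n C vs \<longleftrightarrow> (\<forall>v\<in>set vs. length v = n) \<and> lin_indep_vecs n vs \<and> span_vecs n vs = C"

definition is_subspace :: "nat \<Rightarrow> 'a::field list set \<Rightarrow> bool" where
  "is_subspace n C \<longleftrightarrow> (\<forall>v\<in>C. length v = n) \<and> zero_vec n \<in> C \<and>
     (\<forall>v\<in>C. \<forall>w\<in>C. map2 (+) v w \<in> C) \<and> (\<forall>a. \<forall>v\<in>C. map ((*) a) v \<in> C)"

definition is_min_dist :: "nat \<Rightarrow> 'a::field list set \<Rightarrow> nat \<Rightarrow> bool" where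
  "is_min_dist n C d \<longleftrightarrow> (\<exists>x\<in>C. x \<noteq> zero_vec n \<and> wt x = d) \<and>
     (\<forall>x\<in>C. x \<noteq> zero_vec n \<longrightarrow> d \<le> wt x)"

definition is_code :: "nat \<Rightarrow> nat \<Rightarrow> nat \<Rightarrow> 'a::field list set \<Rightarrow> bool" where
  "is_code n k d C \<longleftrightarrow> is_subspace n C \<and> (\<exists>vs. is_basis n C vs \<and> length vs = k) \<and> is_min_dist n C d"

definition vsum :: "nat \<Rightarrow> 'a::field list list \<Rightarrow> 'a list" where
  "vsum n vs = map (\<lambda>r. \<Sum>j<length vs. (vs ! j) ! r) [0..<n]"

definition u_bounded :: "nat \<Rightarrow> nat \<Rightarrow> 'a::field list set \<Rightarrow> 'a list list \<Rightarrow> bool" where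
  "u_bounded n u C B \<longleftrightarrow> is_basis n C B \<and>
     (\<forall>j<length B. wt (B ! j) = u) \<and>
     is_min_dist n C (wt (vsum n B)) \<and>
     real u \<ge> real (wt (vsum n B)) * (1 + 1 / real (length B))"

text \<open>The construction Basis(B); indices are 0-based: m,r in {0..k}, block r of a'_m is
  a_{(r-m) mod (k+1)} with a_0 = 0 and a_s = B!(s-1).\<close>
definition cbasis :: "nat \<Rightarrow> 'a::field list list \<Rightarrow> 'a list list" where
  "cbasis n B = (let k = length B in
     map (\<lambda>m. concat (map (\<lambda>r. let s = (r + (k + 1) - m) mod (k + 1) in
                                  if s = 0 then zero_vec n else B ! (s - 1)) [0..<k+1])) [0..<k+1])"

definition basis_step :: "nat \<times> 'a::field list list \<Rightarrow> nat \<times> 'a list list" where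
  "basis_step p = (fst p * (length (snd p) + 1), cbasis (fst p) (snd p))"

definition Basis_it :: "nat \<Rightarrow> nat \<Rightarrow> 'a::field list list \<Rightarrow> nat \<times> 'a list list" where
  "Basis_it j n B = (basis_step ^^ j) (n, B)"

definition Code_it :: "nat \<Rightarrow> nat \<Rightarrow> 'a::field list list \<Rightarrow> 'a list set" where
  "Code_it j n B = span_vecs (fst (Basis_it j n B)) (snd (Basis_it j n B))"

definition A1 :: "nat \<Rightarrow> nat \<Rightarrow> 'a::field" where
  "A1 r c = (if r = 0 \<and> c = 1 then -1 else if r = 1 \<and> c = 0 then 1 else 0)"

definition B1 :: "nat \<Rightarrow> nat \<Rightarrow> 'a::field" where
  "B1 r c = (if r = c then 1 else -1)"

text \<open>Matrices as 0-indexed entry functions; Bmat i is 2 x 2i, Amat i is 2i x 2i (i >= 1).\<close>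
fun Bmat :: "nat \<Rightarrow> nat \<Rightarrow> nat \<Rightarrow> 'a::field" where
  "Bmat 0 r c = 0"
| "Bmat (Suc 0) r c = B1 r c"
| "Bmat (Suc (Suc i)) r c = (if c < 2 then B1 r c else Bmat (Suc i) r (c - 2))"

fun Amat :: "nat \<Rightarrow> nat \<Rightarrow> nat \<Rightarrow> 'a::field" where
  "Amat 0 r c = 0"
| "Amat (Suc 0) r c = A1 r c"
| "Amat (Suc (Suc i)) r c =
     (if r < 2 then (if c < 2 then A1 r c else Bmat (Suc i) r (c - 2))
      else (if c < 2 then - Bmat (Suc i) c (r - 2) else Amat (Suc i) (r - 2) (c - 2)))"

definition Bi :: "nat \<Rightarrow> 'a::field list list" where
  "Bi i = map (\<lambda>c. map (\<lambda>r. Amat i r c) [0..<2*i]) [0..<2*i-1]"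

definition Ci :: "nat \<Rightarrow> 'a::field list set" where
  "Ci i = span_vecs (2*i) (Bi i)"

end

theory Submission
  imports Defs
begin

lemma lincomb_len[simp]: "length (lincomb n c vs) = n"
  by (simp add: lincomb_def)

lemma lincomb_nth: "p < n \<Longrightarrow> lincomb n c vs ! p = (\<Sum>j<length vs. c j * vs ! j ! p)"
  by (simp add: lincomb_def)

lemma wt_Nil[simp]: "wt [] = 0" by (simp add: wt_def)

lemma wt_append[simp]: "wt (xs @ ys) = wt xs + wt ys"
  by (simp add: wt_def)

lemma wt_concat: "wt (concat (map f [0..<K])) = (\<Sum>q<K. wt (f q))"
  by (induction K) auto

lemma wt_zero[simp]: "wt (zero_vec n) = 0"
  by (simp add: wt_def zero_vec_def)

lemma wt_pos: "length x = n \<Longrightarrow> x \<noteq> zero_vec n \<Longrightarrow> 1 \<le> wt x"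
proof -
  assume "length x = n" "x \<noteq> zero_vec n"
  then obtain p where "p < n" "x ! p \<noteq> 0"
    by (metis nth_equalityI length_replicate nth_replicate zero_vec_def)
  then have "x ! p \<in> set (filter (\<lambda>x. x \<noteq> 0) x)" using \<open>length x = n\<close> by auto
  then show ?thesis unfolding wt_def
    by (metis One_nat_def Suc_leI length_pos_if_in_set)
qed

lemma wt_scale: "a \<noteq> 0 \<Longrightarrow> length v = n \<Longrightarrow> wt (map (\<lambda>r. a * v ! r) [0..<n]) = wt v"
proof -
  assume a: "a \<noteq> 0" "length v = n"
  have "map (\<lambda>r. a * v ! r) [0..<n] = map ((*) a) v"
    using a by (intro nth_equalityI) auto
  then show ?thesis using a by (simp add: wt_def filter_map comp_def)
qed

lemma lincomb_single:
  assumes "\<And>j. j < length vs \<Longrightarrow> j \<noteq> j0 \<Longrightarrow> c j = 0" "j0 < length vs"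
  shows "lincomb n c vs = map (\<lambda>r. c j0 * vs ! j0 ! r) [0..<n]"
proof -
  have "(\<Sum>j<length vs. c j * vs ! j ! r) = c j0 * vs ! j0 ! r" for r
  proof -
    have "(\<Sum>j<length vs. c j * vs ! j ! r) = (\<Sum>j<length vs. if j = j0 then c j0 * vs ! j0 ! r else 0)"
      by (rule sum.cong) (auto simp: assms)
    then show ?thesis using assms(2) by simp
  qed
  then show ?thesis by (simp add: lincomb_def)
qed

lemma span_subspace:
  assumes "\<forall>v\<in>set vs. length v = n"
  shows "is_subspace n (span_vecs n vs)"
proof -
  have z: "zero_vec n = lincomb n (\<lambda>_. 0) vs" by (simp add: lincomb_def zero_vec_def map_replicate_const)
  have add: "map2 (+) (lincomb n c vs) (lincomb n c' vs) = lincomb n (\<lambda>j. c j + c' j) vs" for c c'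
    by (simp add: lincomb_def map2_map_map sum.distrib distrib_right)
  have sc: "map ((*) a) (lincomb n c vs) = lincomb n (\<lambda>j. a * c j) vs" for a c
    by (simp add: lincomb_def sum_distrib_left mult.assoc)
  show ?thesis unfolding is_subspace_def span_vecs_def
    by (auto simp: add sc) (metis z rangeI)
qed

lemma vsum_lincomb: "vsum n vs = lincomb n (\<lambda>_. 1) vs"
  by (simp add: vsum_def lincomb_def)

lemma concat_len: "(\<And>q. q < K \<Longrightarrow> length (f q) = n) \<Longrightarrow> length (concat (map f [0..<K])) = K * n"
  by (induction K) auto

lemma concat_nth: "(\<And>q. q < K \<Longrightarrow> length (f q) = n) \<Longrightarrow> q < K \<Longrightarrow> p < n \<Longrightarrow>
   concat (map f [0..<K]) ! (q * n + p) = f q ! p"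
proof (induction K)
  case 0 then show ?case by simp
next
  case (Suc K)
  have l: "length (concat (map f [0..<K])) = K * n" using Suc.prems(1) by (intro concat_len) auto
  show ?case
  proof (cases "q < K")
    case True
    have "q * n + p < Suc q * n" using Suc.prems by simp
    also have "\<dots> \<le> K * n" using True by (intro mult_le_mono1) simp
    finally have "q * n + p < K * n" .
    then show ?thesis using Suc True l by (simp add: nth_append)
  next
    case False
    then have "q = K" using Suc by simp
    then show ?thesis using l Suc by (simp add: nth_append)
  qed
qed

definition sig :: "nat \<Rightarrow> nat \<Rightarrow> nat \<Rightarrow> nat" where
  "sig k q j = (if j < q then q - 1 - j else q + k - j)"

lemma modform: "(m::nat) < k + 1 \<Longrightarrow> q < k + 1 \<Longrightarrow>
  (q + (k + 1) - m) mod (k + 1) = (if m \<le> q then q - m else q + (k + 1) - m)"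
proof (cases "m \<le> q")
  case True
  assume "q < k + 1"
  have "(q + (k + 1) - m) mod (k + 1) = ((q - m) + (k + 1)) mod (k + 1)"
  proof -
    have e: "q + (k + 1) - m = (q - m) + (k + 1)" using True by arith
    show ?thesis by (simp only: e)
  qed
  also have "\<dots> = (q - m) mod (k + 1)" by (rule mod_add_self2)
  also have "\<dots> = q - m" using \<open>q < k + 1\<close> by (intro mod_less) simp
  finally show ?thesis using True by simp
next
  case False
  assume "m < k + 1"
  then have "q + (k + 1) - m < k + 1" using False by simp
  then show ?thesis using False by (simp only: mod_less) simp
qed

definition gb :: "nat \<Rightarrow> 'a::field list list \<Rightarrow> nat \<Rightarrow> nat \<Rightarrow> 'a list" where
  "gb n B m r = (let s = (r + (length B + 1) - m) mod (length B + 1) in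
     if s = 0 then zero_vec n else B ! (s - 1))"

lemma cbasis_gb: "cbasis n B = map (\<lambda>m. concat (map (gb n B m) [0..<length B + 1])) [0..<length B + 1]"
  unfolding cbasis_def gb_def Let_def by simp

lemma gb_eq: "m < length B + 1 \<Longrightarrow> r < length B + 1 \<Longrightarrow>
   gb n B m r = (if m \<le> r then (if m = r then zero_vec n else B ! (r - m - 1)) else B ! (r + length B - m))"
proof -
  assume a: "m < length B + 1" "r < length B + 1"
  have e: "(r + (length B + 1) - m) mod (length B + 1) = (if m \<le> r then r - m else r + (length B + 1) - m)"
    using a by (rule modform)
  show ?thesis unfolding gb_def Let_def e using a by auto
qed

lemma gb_len: "\<forall>v\<in>set B. length v = n \<Longrightarrow> m < length B + 1 \<Longrightarrow> r < length B + 1 \<Longrightarrow>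
   length (gb n B m r) = n"
  by (subst gb_eq) (auto simp: zero_vec_def)

lemma cbasis_len[simp]: "length (cbasis n B) = length B + 1"
  by (simp add: cbasis_gb)

lemma cbasis_nth: "m < length B + 1 \<Longrightarrow> cbasis n B ! m = concat (map (gb n B m) [0..<length B + 1])"
  unfolding cbasis_gb by (simp del: upt_Suc)

lemma cbasis_nth_len:
  assumes "\<forall>v\<in>set B. length v = n" "m < length B + 1"
  shows "length (cbasis n B ! m) = n * (length B + 1)"
  using assms by (simp only: cbasis_nth) (subst concat_len[where n=n], auto simp: gb_len)

lemma cbasis_lens:
  assumes "\<forall>v\<in>set B. length v = n"
  shows "\<forall>v\<in>set (cbasis n B). length v = n * (length B + 1)"
  using assms cbasis_nth_len by (metis cbasis_len in_set_conv_nth)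

lemma block_lemma:
  assumes L: "\<forall>v\<in>set B. length v = n" and k: "length B = k"
  shows "lincomb (n * (k + 1)) c (cbasis n B) =
     concat (map (\<lambda>q. lincomb n (\<lambda>j. c (sig k q j)) B) [0..<k + 1])"
proof (rule nth_equalityI)
  show "length (lincomb (n * (k + 1)) c (cbasis n B)) =
    length (concat (map (\<lambda>q. lincomb n (\<lambda>j. c (sig k q j)) B) [0..<k + 1]))"
    by (subst concat_len[where n=n]) auto
  fix x assume "x < length (lincomb (n * (k + 1)) c (cbasis n B))"
  then have x: "x < n * (k + 1)" by simp
  define q where "q = x div n"
  define p where "p = x mod n"
  have np: "0 < n" using x by (cases n) auto
  have xqp: "x = q * n + p" by (simp add: q_def p_def)
  have "x < (k + 1) * n" using x by (simp only: mult.commute)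
  from less_mult_imp_div_less[OF this] have qk: "q < k + 1" unfolding q_def .
  have pn: "p < n" using np by (simp add: p_def)
  have R: "concat (map (\<lambda>q. lincomb n (\<lambda>j. c (sig k q j)) B) [0..<k + 1]) ! x
      = (\<Sum>j<k. c (sig k q j) * B ! j ! p)"
    unfolding xqp by (subst concat_nth[where n=n and q=q and p=p]) (use qk pn in \<open>auto simp: lincomb_nth k\<close>)
  have E: "cbasis n B ! m ! x = (if m \<le> q then (if m = q then 0 else B ! (q - m - 1) ! p)
       else B ! (q + k - m) ! p)" if "m < k + 1" for m
  proof -
    have "cbasis n B ! m ! x = gb n B m q ! p"
      unfolding cbasis_nth[OF that[folded k]] xqp
      by (subst concat_nth[where n=n]) (use L qk pn k that in \<open>auto intro!: gb_len\<close>)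
    also have "\<dots> = (if m \<le> q then (if m = q then 0 else B ! (q - m - 1) ! p)
       else B ! (q + k - m) ! p)"
      using that qk pn k by (subst gb_eq) (auto simp: zero_vec_def)
    finally show ?thesis .
  qed
  have "lincomb (n * (k + 1)) c (cbasis n B) ! x = (\<Sum>m<k+1. c m * cbasis n B ! m ! x)"
    using x by (simp add: lincomb_nth k)
  also have "\<dots> = (\<Sum>m\<in>{..<k+1} - {q}. c m * cbasis n B ! m ! x)"
    using qk E by (intro sum.mono_neutral_right) auto
  also have "\<dots> = (\<Sum>j<k. c (sig k q j) * B ! j ! p)"
  proof (rule sum.reindex_bij_witness[where i = "sig k q" and j = "\<lambda>m. if m \<le> q then q - m - 1 else q + k - m"])
    fix a assume "a \<in> {..<k + 1} - {q}"
    then show "sig k q (if a \<le> q then q - a - 1 else q + k - a) = a"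
      "(if a \<le> q then q - a - 1 else q + k - a) \<in> {..<k}"
      "c (sig k q (if a \<le> q then q - a - 1 else q + k - a)) *
          B ! (if a \<le> q then q - a - 1 else q + k - a) ! p = c a * cbasis n B ! a ! x"
      using qk by (auto simp: sig_def E)
  next
    fix b assume "b \<in> {..<k}"
    then show "(if sig k q b \<le> q then q - sig k q b - 1 else q + k - sig k q b) = b"
      "sig k q b \<in> {..<k + 1} - {q}"
      using qk by (auto simp: sig_def)
  qed
  finally show "lincomb (n * (k + 1)) c (cbasis n B) ! x =
    concat (map (\<lambda>q. lincomb n (\<lambda>j. c (sig k q j)) B) [0..<k + 1]) ! x" using R by simp
qed

definition good :: "nat \<Rightarrow> nat \<Rightarrow> nat \<Rightarrow> nat \<Rightarrow> 'a::field list list \<Rightarrow> bool" where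
  "good n k u d B \<longleftrightarrow> length B = k \<and> (\<forall>v\<in>set B. length v = n) \<and> lin_indep_vecs n B \<and>
     (\<forall>j<k. wt (B ! j) = u) \<and> wt (vsum n B) = d \<and> is_min_dist n (span_vecs n B) d"

lemma lincomb_zero: "(\<And>j. j < length vs \<Longrightarrow> c j = 0) \<Longrightarrow> lincomb n c vs = zero_vec n"
  unfolding lincomb_def zero_vec_def by (intro nth_equalityI) auto

lemma sig_lt: "q < k + 1 \<Longrightarrow> j < k \<Longrightarrow> sig k q j < k + 1 \<and> sig k q j \<noteq> q"
  by (auto simp: sig_def)

lemma sig_surj: "q < k + 1 \<Longrightarrow> m < k + 1 \<Longrightarrow> m \<noteq> q \<Longrightarrow> \<exists>j<k. sig k q j = m"
  by (rule exI[where x="if m \<le> q then q - m - 1 else q + k - m"]) (auto simp: sig_def)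

lemma sig_inj: "q < k + 1 \<Longrightarrow> j < k \<Longrightarrow> j' < k \<Longrightarrow> sig k q j = sig k q j' \<Longrightarrow> j = j'"
  by (auto simp: sig_def split: if_splits)

lemma concat_zero:
  assumes "\<And>q. q < K \<Longrightarrow> length (f q) = n" "concat (map f [0..<K]) = zero_vec (K * n)" "q < K"
  shows "f q = zero_vec n"
proof (rule nth_equalityI)
  show "length (f q) = length (zero_vec n)" using assms by (simp add: zero_vec_def)
  fix p assume "p < length (f q)"
  then have p: "p < n" using assms by simp
  have "q * n + p < K * n"
  proof -
    have "q * n + p < Suc q * n" using p by simp
    also have "\<dots> \<le> K * n" using assms(3) by (intro mult_le_mono1) simp
    finally show ?thesis .
  qed
  then have "concat (map f [0..<K]) ! (q * n + p) = 0" using assms(2) by (simp add: zero_vec_def)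
  then show "f q ! p = zero_vec n ! p" using concat_nth[OF assms(1) assms(3) p] p
    by (simp add: zero_vec_def)
qed

context
  fixes n k u d :: nat and B :: "'a::field list list"
  assumes G: "good n k u d B" and k1: "1 \<le> k"
begin

lemma L: "\<forall>v\<in>set B. length v = n" and lk: "length B = k"
  using G by (auto simp: good_def)

lemma blk_len: "length (lincomb n c B) = n" by simp

lemma F2: "wt (lincomb (n * (k + 1)) c (cbasis n B)) = (\<Sum>q<k+1. wt (lincomb n (\<lambda>j. c (sig k q j)) B))"
  by (simp only: block_lemma[OF L lk] wt_concat)

lemma F3: "lincomb n c' B = zero_vec n \<Longrightarrow> j < k \<Longrightarrow> c' j = 0"
  using G by (auto simp: good_def lin_indep_vecs_def)

lemma F4: "lin_indep_vecs (n * (k + 1)) (cbasis n B)"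
  unfolding lin_indep_vecs_def
proof (intro allI impI)
  fix c m assume z: "lincomb (n * (k + 1)) c (cbasis n B) = zero_vec (n * (k + 1))"
    and m: "m < length (cbasis n B)"
  have nk: "n * (k + 1) = (k + 1) * n" by simp
  have z': "concat (map (\<lambda>q. lincomb n (\<lambda>j. c (sig k q j)) B) [0..<k + 1]) = zero_vec ((k+1) * n)"
  proof -
    have "concat (map (\<lambda>q. lincomb n (\<lambda>j. c (sig k q j)) B) [0..<k + 1]) = zero_vec (n * (k+1))"
      using z by (simp only: block_lemma[OF L lk])
    then show ?thesis by (simp only: nk)
  qed
  define q where "q = (if m = 0 then 1 else 0::nat)"
  have q: "q < k + 1" "q \<noteq> m" using k1 by (auto simp: q_def)
  obtain j where j: "j < k" "sig k q j = m" using sig_surj[OF q(1) _ q(2)[symmetric]] m lk by auto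
  have "lincomb n (\<lambda>j. c (sig k q j)) B = zero_vec n"
    by (rule concat_zero[OF _ z' q(1)]) simp
  from F3[OF this j(1)] show "c m = 0" using j by simp
qed

lemma F5:
  assumes m0: "m0 < k + 1" "c m0 \<noteq> 0" "\<And>m. m < k + 1 \<Longrightarrow> m \<noteq> m0 \<Longrightarrow> c m = 0"
  shows "wt (lincomb (n * (k + 1)) c (cbasis n B)) = k * u"
proof -
  have W: "wt (lincomb n (\<lambda>j. c (sig k q j)) B) = (if q = m0 then 0 else u)" if q: "q < k + 1" for q
  proof (cases "q = m0")
    case True
    have "lincomb n (\<lambda>j. c (sig k q j)) B = zero_vec n"
      by (rule lincomb_zero) (use sig_lt[OF q] m0 True lk in auto)
    then show ?thesis using True by simp
  next
    case False
    obtain j0 where j0: "j0 < k" "sig k q j0 = m0" using sig_surj[OF q m0(1)] False by auto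
    have "lincomb n (\<lambda>j. c (sig k q j)) B = map (\<lambda>r. c (sig k q j0) * B ! j0 ! r) [0..<n]"
      by (rule lincomb_single) (use sig_lt[OF q] sig_inj[OF q] m0 j0 lk in auto)
    also have "wt \<dots> = wt (B ! j0)"
      using j0 m0 L lk by (intro wt_scale) auto
    also have "\<dots> = u" using G j0 by (simp add: good_def)
    finally show ?thesis using False by simp
  qed
  have "wt (lincomb (n * (k + 1)) c (cbasis n B)) = (\<Sum>q<k+1. (if q = m0 then 0 else u))"
    unfolding F2 using W by (intro sum.cong) auto
  also have "\<dots> = (\<Sum>q\<in>{..<k+1} - {m0}. (if q = m0 then 0 else u))"
    using m0 by (subst sum.remove[of _ m0]) auto
  also have "\<dots> = (\<Sum>q\<in>{..<k+1} - {m0}. u)" by (intro sum.cong) auto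
  also have "\<dots> = k * u" using m0 by simp
  finally show ?thesis .
qed

lemma F6: "m < k + 1 \<Longrightarrow> wt (cbasis n B ! m) = k * u"
proof -
  assume m: "m < k + 1"
  have "lincomb (n * (k + 1)) (\<lambda>x. if x = m then 1 else 0) (cbasis n B)
      = map (\<lambda>r. 1 * cbasis n B ! m ! r) [0..<n * (k + 1)]"
    using lincomb_single[of "cbasis n B" m "\<lambda>x. if x = m then 1 else 0"] m lk by simp
  also have "\<dots> = cbasis n B ! m"
    using cbasis_nth_len[OF L, of m] m lk by (intro nth_equalityI) auto
  finally show ?thesis using F5[of m "\<lambda>x. if x = m then 1 else 0"] m by simp
qed

lemma F7: "vsum (n * (k + 1)) (cbasis n B) = concat (map (\<lambda>_. vsum n B) [0..<k + 1])"
  unfolding vsum_lincomb block_lemma[OF L lk] by simp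

lemma F7w: "wt (vsum (n * (k + 1)) (cbasis n B)) = (k + 1) * d"
  unfolding F7 wt_concat using G by (simp add: good_def)

lemma d_pos: "1 \<le> d"
proof -
  from G obtain x where "x \<in> span_vecs n B" "x \<noteq> zero_vec n" "wt x = d"
    by (auto simp: good_def is_min_dist_def)
  moreover have "length x = n" using \<open>x \<in> span_vecs n B\<close> by (auto simp: span_vecs_def)
  ultimately show ?thesis using wt_pos by metis
qed

lemma F8:
  assumes ku: "(k + 1) * d \<le> k * u"
    and x: "x \<in> span_vecs (n * (k + 1)) (cbasis n B)" "x \<noteq> zero_vec (n * (k + 1))"
  shows "(k + 1) * d \<le> wt x"
proof -
  obtain c where c: "x = lincomb (n * (k + 1)) c (cbasis n B)" using x by (auto simp: span_vecs_def)
  show ?thesis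
  proof (cases "\<exists>m1 m2. m1 < k + 1 \<and> m2 < k + 1 \<and> m1 \<noteq> m2 \<and> c m1 \<noteq> 0 \<and> c m2 \<noteq> 0")
    case True
    then obtain m1 m2 where mm: "m1 < k + 1" "m2 < k + 1" "m1 \<noteq> m2" "c m1 \<noteq> 0" "c m2 \<noteq> 0" by blast
    have "d \<le> wt (lincomb n (\<lambda>j. c (sig k q j)) B)" if q: "q < k + 1" for q
    proof -
      obtain m where m: "m < k + 1" "m \<noteq> q" "c m \<noteq> 0" using mm by metis
      obtain j where j: "j < k" "sig k q j = m" using sig_surj[OF q m(1) m(2)] by auto
      have "lincomb n (\<lambda>j. c (sig k q j)) B \<noteq> zero_vec n" using F3[of "\<lambda>j. c (sig k q j)", OF _ j(1)] j m by auto
      moreover have "lincomb n (\<lambda>j. c (sig k q j)) B \<in> span_vecs n B" by (simp add: span_vecs_def)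
      ultimately show ?thesis using G by (auto simp: good_def is_min_dist_def)
    qed
    then have "(\<Sum>q<k+1. d) \<le> (\<Sum>q<k+1. wt (lincomb n (\<lambda>j. c (sig k q j)) B))"
      by (intro sum_mono) auto
    then show ?thesis unfolding c F2 by simp
  next
    case False
    have "\<exists>m0<k+1. c m0 \<noteq> 0"
    proof (rule ccontr)
      assume "\<not> ?thesis"
      then have "x = zero_vec (n * (k + 1))" unfolding c by (intro lincomb_zero) (use lk in auto)
      then show False using x by simp
    qed
    then obtain m0 where m0: "m0 < k + 1" "c m0 \<noteq> 0" by blast
    have "wt x = k * u" unfolding c by (rule F5[of m0 c, OF m0(1) m0(2)]) (use False m0 in blast)
    then show ?thesis using ku by simp
  qed
qed

lemma step:
  assumes ku: "(k + 1) * d \<le> k * u"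
  shows "good (n * (k + 1)) (k + 1) (k * u) ((k + 1) * d) (cbasis n B)"
  unfolding good_def
proof (intro conjI)
  show "length (cbasis n B) = k + 1" using lk by simp
  show "\<forall>v\<in>set (cbasis n B). length v = n * (k + 1)" using cbasis_lens[OF L] lk by simp
  show "lin_indep_vecs (n * (k + 1)) (cbasis n B)" by (rule F4)
  show "\<forall>j<k + 1. wt (cbasis n B ! j) = k * u" using F6 by auto
  show "wt (vsum (n * (k + 1)) (cbasis n B)) = (k + 1) * d" by (rule F7w)
  show "is_min_dist (n * (k + 1)) (span_vecs (n * (k + 1)) (cbasis n B)) ((k + 1) * d)"
    unfolding is_min_dist_def
  proof (intro conjI ballI impI)
    show "\<exists>x\<in>span_vecs (n * (k + 1)) (cbasis n B). x \<noteq> zero_vec (n * (k + 1)) \<and> wt x = (k + 1) * d"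
    proof (intro bexI conjI)
      show "vsum (n * (k + 1)) (cbasis n B) \<in> span_vecs (n * (k + 1)) (cbasis n B)"
        by (simp add: vsum_lincomb span_vecs_def)
      show "wt (vsum (n * (k + 1)) (cbasis n B)) = (k + 1) * d" by (rule F7w)
      show "vsum (n * (k + 1)) (cbasis n B) \<noteq> zero_vec (n * (k + 1))"
        using F7w d_pos by (metis wt_zero mult_is_0 add_is_0 one_neq_zero not_one_le_zero)
    qed
    fix x assume "x \<in> span_vecs (n * (k + 1)) (cbasis n B)" "x \<noteq> zero_vec (n * (k + 1))"
    then show "(k + 1) * d \<le> wt x" by (rule F8[OF ku])
  qed
qed

end

lemma m1p_2: "(-1::'a::field) ^ (x + 2) = (-1) ^ x" by simp

lemma m1p_sub2: "2 \<le> x \<Longrightarrow> (-1::'a::field) ^ (x - 2) = (-1) ^ x"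
  by (metis le_add_diff_inverse2 m1p_2)

lemma Bmat_formula: "1 \<le> i \<Longrightarrow> r < 2 \<Longrightarrow> c < 2 * i \<Longrightarrow> (Bmat i r c :: 'a::field) = (-1) ^ (r + c)"
proof (induction i r c rule: Bmat.induct)
  case (1 r c) then show ?case by simp
next
  case (2 r c) then show ?case by (auto simp: B1_def less_2_cases_iff)
next
  case (3 i r c)
  show ?case
  proof (cases "c < 2")
    case True then show ?thesis using 3 by (auto simp: B1_def less_2_cases_iff)
  next
    case False
    then have "(Bmat (Suc i) r (c - 2) :: 'a) = (-1) ^ (r + (c - 2))" using 3 by simp
    also have "\<dots> = (-1) ^ (r + c)" using False m1p_sub2[of "r + c", where 'a='a] by simp
    finally show ?thesis using False by simp
  qed
qed

definition tt :: "nat \<Rightarrow> nat \<Rightarrow> 'a::field" where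
  "tt r c = (if c < r then -1 else if c = r then 0 else 1)"

lemma Amat_formula: "1 \<le> i \<Longrightarrow> r < 2 * i \<Longrightarrow> c < 2 * i \<Longrightarrow>
   (Amat i r c :: 'a::field) = (-1) ^ r * ((-1) ^ c * tt r c)"
proof (induction i r c rule: Amat.induct)
  case (1 r c) then show ?case by simp
next
  case (2 r c) then show ?case by (auto simp: A1_def tt_def less_2_cases_iff)
next
  case (3 i r c)
  consider "r < 2" "c < 2" | "r < 2" "\<not> c < 2" | "\<not> r < 2" "c < 2" | "\<not> r < 2" "\<not> c < 2" by blast
  then show ?case
  proof cases
    case 1 then show ?thesis by (auto simp: A1_def tt_def less_2_cases_iff)
  next
    case 2
    then have "(Bmat (Suc i) r (c - 2) :: 'a) = (-1) ^ (r + (c - 2))" using 3 by (intro Bmat_formula) auto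
    also have "\<dots> = (-1) ^ (r + c)" using 2 m1p_sub2[of "r + c", where 'a='a] by simp
    finally show ?thesis using 2 by (simp add: tt_def power_add)
  next
    case 3
    then have "(Bmat (Suc i) c (r - 2) :: 'a) = (-1) ^ (c + (r - 2))" using "3.prems" by (intro Bmat_formula) auto
    also have "\<dots> = (-1) ^ (r + c)" using 3 m1p_sub2[of "r + c", where 'a='a] by (simp add: add.commute)
    finally show ?thesis using 3 by (simp add: tt_def power_add)
  next
    case 4
    then have "(Amat (Suc i) (r - 2) (c - 2) :: 'a) = (-1) ^ (r - 2) * ((-1) ^ (c - 2) * tt (r - 2) (c - 2))"
      using "3.IH" "3.prems" by auto
    moreover have "tt (r - 2) (c - 2) = (tt r c :: 'a)" using 4 by (auto simp: tt_def)
    moreover have "(-1::'a) ^ (r - 2) = (-1) ^ r" using 4 m1p_sub2[of r, where 'a='a] by simp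
    moreover have "(-1::'a) ^ (c - 2) = (-1) ^ c" using 4 m1p_sub2[of c, where 'a='a] by simp
    ultimately show ?thesis using 4 by simp
  qed
qed

definition alt :: "nat \<Rightarrow> 'a::field" where "alt m = (\<Sum>c<m. (-1) ^ c)"

lemma alt_eval: "alt m = (if even m then 0 else 1)"
  by (induction m) (auto simp: alt_def)

lemma T_formula: "(\<Sum>c<M. (-1) ^ c * tt r c) =
  (if M \<le> r then - alt M else alt M - 2 * alt r - (-1) ^ r :: 'a::field)"
proof (induction M)
  case 0 then show ?case by (simp add: alt_def)
next
  case (Suc M)
  consider "Suc M \<le> r" | "M = r" | "r < M" by linarith
  then show ?case
  proof cases
    case 1 then show ?thesis using Suc by (simp add: alt_def tt_def)
  next
    case 2 then show ?thesis using Suc by (simp add: alt_def tt_def)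
  next
    case 3 then show ?thesis using Suc by (simp add: alt_def tt_def)
  qed
qed

lemma m1p: "(-1::'a::field) ^ r = (if even r then 1 else -1)"
  by (induction r) auto

lemma Bi_len[simp]: "length (Bi i) = 2 * i - 1" by (simp add: Bi_def)

lemma Bi_nth: "c < 2 * i - 1 \<Longrightarrow> Bi i ! c = map (\<lambda>r. Amat i r c) [0..<2*i]"
  by (simp add: Bi_def)

lemma Bi_lens: "\<forall>v\<in>set (Bi i). length v = 2 * i"
  by (simp add: Bi_def)

lemma wt_map: "wt (map f [0..<N]) = card {r. r < N \<and> f r \<noteq> 0}"
proof -
  have "wt (map f [0..<N]) = length (filter (\<lambda>r. f r \<noteq> 0) [0..<N])"
    by (simp add: wt_def filter_map comp_def)
  also have "\<dots> = card {r. r < N \<and> f r \<noteq> 0}"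
    unfolding length_filter_conv_card by (intro arg_cong[where f=card]) auto
  finally show ?thesis .
qed

lemma Bi_wt: "1 \<le> i \<Longrightarrow> c < 2 * i - 1 \<Longrightarrow> wt (Bi i ! c :: 'a::field list) = 2 * i - 1"
proof -
  assume a: "1 \<le> i" "c < 2 * i - 1"
  have "{r. r < 2 * i \<and> (Amat i r c :: 'a) \<noteq> 0} = {..<2*i} - {c}"
    using a by (auto simp: Amat_formula tt_def split: if_splits)
  then show ?thesis using a by (simp add: Bi_nth wt_map)
qed

lemma Bi_vsum: "1 \<le> i \<Longrightarrow> vsum (2 * i) (Bi i :: 'a::field list list) =
   map (\<lambda>r. if r = 2 * i - 1 then 1 else 0) [0..<2*i]"
proof (rule nth_equalityI)
  assume i: "1 \<le> i"
  show "length (vsum (2 * i) (Bi i :: 'a list list)) = length (map (\<lambda>r. if r = 2 * i - 1 then 1 else 0 :: 'a) [0..<2*i])"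
    by (simp add: vsum_def)
  fix r assume "r < length (vsum (2 * i) (Bi i :: 'a list list))"
  then have r: "r < 2 * i" by (simp add: vsum_def)
  define M where "M = 2 * i - 1"
  have M: "odd M" "2 * i = M + 1" using i by (auto simp: M_def)
  have "vsum (2 * i) (Bi i :: 'a list list) ! r = (\<Sum>c<M. (Amat i r c :: 'a))"
    using r by (simp add: vsum_def Bi_nth M_def)
  also have "\<dots> = (-1) ^ r * (\<Sum>c<M. (-1) ^ c * tt r c)"
    using r i M by (simp add: Amat_formula sum_distrib_left)
  also have "\<dots> = (if r = M then 1 else 0)"
  proof (cases "r = M")
    case True then show ?thesis using M by (simp only: T_formula) (simp add: alt_eval m1p)
  next
    case False
    then have "r < M" using r M by simp
    then show ?thesis using M by (simp only: T_formula) (auto simp: alt_eval m1p)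
  qed
  finally show "vsum (2 * i) (Bi i :: 'a list list) ! r = map (\<lambda>r. if r = 2 * i - 1 then 1 else 0 :: 'a) [0..<2*i] ! r"
    using r by (simp add: M_def)
qed

lemma Bi_vsum_wt: "1 \<le> i \<Longrightarrow> wt (vsum (2 * i) (Bi i :: 'a::field list list)) = 1"
proof -
  assume i: "1 \<le> i"
  have "{r. r < 2 * i \<and> (if r = 2 * i - 1 then 1 else 0 :: 'a) \<noteq> 0} = {2 * i - 1}" using i by auto
  then show ?thesis using i by (simp add: Bi_vsum wt_map)
qed

lemma Bi_indep: "1 \<le> i \<Longrightarrow> lin_indep_vecs (2 * i) (Bi i :: 'a::field list list)"
  unfolding lin_indep_vecs_def
proof (intro allI impI)
  fix x :: "nat \<Rightarrow> 'a" and c0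
  assume i: "1 \<le> i" and z: "lincomb (2 * i) x (Bi i) = zero_vec (2 * i)" and c0: "c0 < length (Bi i)"
  define M where "M = 2 * i - 1"
  have M: "2 * i = M + 1" using i by (auto simp: M_def)
  define y where "y c = (-1) ^ c * x c" for c
  have row: "(\<Sum>c<M. y c * tt r c) = 0" if r: "r < 2 * i" for r
  proof -
    have "0 = lincomb (2 * i) x (Bi i) ! r" using z r by (simp add: zero_vec_def)
    also have "\<dots> = (\<Sum>c<M. x c * Amat i r c)" using r by (simp add: lincomb_nth Bi_nth M_def)
    also have "\<dots> = (-1) ^ r * (\<Sum>c<M. y c * tt r c)"
      using r M i by (simp add: Amat_formula sum_distrib_left y_def algebra_simps)
    finally show ?thesis by simp
  qed
  have S: "(\<Sum>c<M. y c) = 0"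
    using row[of M] M by (simp add: tt_def sum_negf)
  have Y: "\<forall>c<r. y c = 0" if "r \<le> M" for r
    using that
  proof (induction r)
    case 0 then show ?case by simp
  next
    case (Suc r)
    then have IH: "\<forall>c<r. y c = 0" and rM: "r < M" by auto
    have e1: "(\<Sum>c<M. y c * tt r c) = (\<Sum>c<M. if r < c then y c else 0)"
      by (rule sum.cong) (auto simp: tt_def IH)
    have "(\<Sum>c<M. y c) = (\<Sum>c<M. (if c = r then y c else 0) + (if r < c then y c else 0))"
      by (rule sum.cong) (auto simp: IH)
    also have "\<dots> = y r + (\<Sum>c<M. if r < c then y c else 0)" using rM by (simp add: sum.distrib)
    finally have "y r = 0" using S e1 row[of r] rM M by simp
    then show ?case using IH less_Suc_eq by auto
  qed
  have "y c0 = 0" using Y[of M] c0 by (simp add: M_def)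
  then show "x c0 = 0" by (simp add: y_def)
qed

lemma Bi_good: "1 \<le> i \<Longrightarrow> good (2 * i) (2 * i - 1) (2 * i - 1) 1 (Bi i :: 'a::field list list)"
  unfolding good_def
proof (intro conjI)
  assume i: "1 \<le> i"
  show "length (Bi i :: 'a list list) = 2 * i - 1" by simp
  show "\<forall>v\<in>set (Bi i :: 'a list list). length v = 2 * i" by (rule Bi_lens)
  show "lin_indep_vecs (2 * i) (Bi i :: 'a list list)" using i by (rule Bi_indep)
  show "\<forall>j<2 * i - 1. wt (Bi i ! j :: 'a list) = 2 * i - 1" using i Bi_wt by blast
  show "wt (vsum (2 * i) (Bi i :: 'a list list)) = 1" using i by (rule Bi_vsum_wt)
  show "is_min_dist (2 * i) (span_vecs (2 * i) (Bi i :: 'a list list)) 1"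
    unfolding is_min_dist_def
  proof (intro conjI ballI impI)
    show "\<exists>x\<in>span_vecs (2 * i) (Bi i :: 'a list list). x \<noteq> zero_vec (2 * i) \<and> wt x = 1"
      using Bi_vsum_wt[OF i, where 'a='a]
      by (intro bexI[of _ "vsum (2 * i) (Bi i)"]) (auto simp: span_vecs_def vsum_lincomb)
    fix x assume "x \<in> span_vecs (2 * i) (Bi i :: 'a list list)" "x \<noteq> zero_vec (2 * i)"
    then show "1 \<le> wt x" using wt_pos[of x "2*i"] by (auto simp: span_vecs_def)
  qed
qed

lemma step':
  assumes "good n k u d (B :: 'a::field list list)" "1 \<le> k" "(k + 1) * d \<le> k * u"
    "n' = n * (k + 1)" "k' = k + 1" "u' = k * u" "d' = (k + 1) * d"
  shows "good n' k' u' d' (cbasis n B)"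
  using step[OF assms(1,2,3)] assms(4-7) by simp

lemma to_code:
  assumes G: "good n k u d (B :: 'a::field list list)" and k: "1 \<le> k" and ku: "(k + 1) * d \<le> k * u"
  shows "is_code n k d (span_vecs n B) \<and> u_bounded n u (span_vecs n B) B"
proof -
  have L: "\<forall>v\<in>set B. length v = n" and lk: "length B = k" and I: "lin_indep_vecs n B"
    and W: "\<forall>j<k. wt (B ! j) = u" and V: "wt (vsum n B) = d" and MD: "is_min_dist n (span_vecs n B) d"
    using G by (auto simp: good_def)
  have basis: "is_basis n (span_vecs n B) B" using L I by (simp add: is_basis_def)
  have ku': "real ((k + 1) * d) \<le> real (k * u)" using ku by (simp only: of_nat_le_iff)
  have "real ((k + 1) * d) / real k \<le> real (k * u) / real k" using ku' by (intro divide_right_mono) auto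
  also have "\<dots> = real u" using k by simp
  finally have R0: "real ((k + 1) * d) / real k \<le> real u" .
  have "real d * (1 + 1 / real k) = real ((k + 1) * d) / real k" using k by (simp add: field_simps)
  also have "\<dots> \<le> real u" by (rule R0)
  finally have R: "real d * (1 + 1 / real k) \<le> real u" .
  show ?thesis unfolding is_code_def u_bounded_def
    using span_subspace[OF L] basis lk W V MD R by auto
qed

lemma arith1: "2 \<le> (i::nat) \<Longrightarrow> j \<le> 4*i^2 - 6*i + 1 \<Longrightarrow> 2*i + j \<le> (2*i-1)^2"
proof -
  assume i: "2 \<le> i" and j: "j \<le> 4*i^2 - 6*i + 1"
  obtain t where t: "i = t + 2" using i by (metis add.commute le_Suc_ex)
  have a: "4*i^2 - 6*i + 1 = 4*t^2 + 10*t + 5" unfolding t by (simp add: power2_eq_square algebra_simps)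
  have b: "(2*i-1)^2 = 4*t^2 + 12*t + 9" unfolding t by (simp add: power2_eq_square algebra_simps)
  have j': "j \<le> 4*t^2 + 10*t + 5" using j a by simp
  show ?thesis unfolding b using j' t by simp
qed

lemma tele: "1 \<le> (i::nat) \<Longrightarrow> (\<Prod>l=1..j. 2*i-2+l) * (2*i-1+j) = (2*i-1) * (\<Prod>l=1..j. 2*i-1+l)"
proof (induction j)
  case 0 then show ?case by simp
next
  case (Suc j)
  have e: "2*i-2+Suc j = 2*i-1+j" "2*i-1+Suc j = 2*i+j" using Suc.prems by auto
  have "(\<Prod>l=1..Suc j. 2*i-2+l) * (2*i-1+Suc j) = ((\<Prod>l=1..j. 2*i-2+l) * (2*i-1+j)) * (2*i+j)"
    by (simp only: prod.cl_ivl_Suc e) simp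
  also have "\<dots> = (2*i-1) * ((\<Prod>l=1..j. 2*i-1+l) * (2*i+j))" using Suc by simp
  also have "\<dots> = (2*i-1) * (\<Prod>l=1..Suc j. 2*i-1+l)"
    by (simp only: prod.cl_ivl_Suc e) simp
  finally show ?case .
qed

lemma cond:
  assumes i: "2 \<le> (i::nat)" and j: "j \<le> 4*i^2 - 6*i + 1"
  shows "(2*i-1+j + 1) * (\<Prod>l=1..j. 2*i-1+l) \<le> (2*i-1+j) * ((2*i-1) * (\<Prod>l=1..j. 2*i-2+l))"
proof -
  have "(2*i-1+j + 1) * (\<Prod>l=1..j. 2*i-1+l) = (2*i+j) * (\<Prod>l=1..j. 2*i-1+l)" using i by simp
  also have "\<dots> \<le> (2*i-1)^2 * (\<Prod>l=1..j. 2*i-1+l)"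
    using arith1[OF i j] by (intro mult_right_mono) auto
  also have "\<dots> = (2*i-1) * ((\<Prod>l=1..j. 2*i-2+l) * (2*i-1+j))"
    using tele[of i j] i by (simp add: power2_eq_square)
  also have "\<dots> = (2*i-1+j) * ((2*i-1) * (\<Prod>l=1..j. 2*i-2+l))" by simp
  finally show ?thesis .
qed

lemma Basis_it_Suc: "Basis_it (Suc j) n B = basis_step (Basis_it j n B)"
  by (simp add: Basis_it_def)

lemma iter:
  assumes i: "2 \<le> i"
  shows "j \<le> 4*i^2 - 6*i + 1 \<Longrightarrow>
    fst (Basis_it j (2*i) (Bi i :: 'a::field list list)) = 2*i * (\<Prod>l=1..j. 2*i-1+l) \<and>
    good (2*i * (\<Prod>l=1..j. 2*i-1+l)) (2*i-1+j) ((2*i-1) * (\<Prod>l=1..j. 2*i-2+l)) (\<Prod>l=1..j. 2*i-1+l)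
      (snd (Basis_it j (2*i) (Bi i :: 'a list list)))"
proof (induction j)
  case 0
  then show ?case using Bi_good[of i, where 'a='a] i by (simp add: Basis_it_def)
next
  case (Suc j)
  then have j: "j \<le> 4*i^2 - 6*i + 1" by simp
  from Suc.IH[OF j] have F: "fst (Basis_it j (2*i) (Bi i :: 'a list list)) = 2*i * (\<Prod>l=1..j. 2*i-1+l)"
    and G: "good (2*i * (\<Prod>l=1..j. 2*i-1+l)) (2*i-1+j) ((2*i-1) * (\<Prod>l=1..j. 2*i-2+l)) (\<Prod>l=1..j. 2*i-1+l)
      (snd (Basis_it j (2*i) (Bi i :: 'a list list)))" by auto
  have lk: "length (snd (Basis_it j (2*i) (Bi i :: 'a list list))) = 2*i-1+j" using G by (simp add: good_def)
  have e1: "2*i-1+Suc j = 2*i-1+j+1" "2*i-2+Suc j = 2*i-1+j" using i by auto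
  have P: "(\<Prod>l=1..Suc j. 2*i-1+l) = (\<Prod>l=1..j. 2*i-1+l) * (2*i-1+j+1)"
    by (simp only: prod.cl_ivl_Suc e1) simp
  have Q: "(\<Prod>l=1..Suc j. 2*i-2+l) = (\<Prod>l=1..j. 2*i-2+l) * (2*i-1+j)"
    by (simp only: prod.cl_ivl_Suc e1) simp
  have "good (2*i * (\<Prod>l=1..Suc j. 2*i-1+l)) (2*i-1+Suc j) ((2*i-1) * (\<Prod>l=1..Suc j. 2*i-2+l))
      (\<Prod>l=1..Suc j. 2*i-1+l) (cbasis (2*i * (\<Prod>l=1..j. 2*i-1+l)) (snd (Basis_it j (2*i) (Bi i :: 'a list list))))"
    by (rule step'[OF G _ cond[OF i j]]) (use i in \<open>simp_all add: P Q\<close>)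
  moreover have "Basis_it (Suc j) (2*i) (Bi i :: 'a list list) =
     (2*i * (\<Prod>l=1..Suc j. 2*i-1+l), cbasis (2*i * (\<Prod>l=1..j. 2*i-1+l)) (snd (Basis_it j (2*i) (Bi i :: 'a list list))))"
    unfolding Basis_it_Suc basis_step_def F lk P by (simp add: algebra_simps)
  ultimately show ?case by simp
qed

theorem proposition4p5:
  fixes i :: nat
  assumes "2 \<le> i"
  shows "(is_code (2*i) (2*i-1) 1 (Ci i :: 'a::field list set) \<and>
          u_bounded (2*i) (2*i-1) (Ci i :: 'a list set) (Bi i)) \<and>
         (\<forall>j::nat. 1 \<le> j \<and> j \<le> 4*i^2 - 6*i + 1 \<longrightarrow>
            is_code (2*i * (\<Prod>l=1..j. 2*i-1+l)) (2*i-1+j) (\<Prod>l=1..j. 2*i-1+l)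
                    (Code_it j (2*i) (Bi i) :: 'a list set) \<and>
            u_bounded (2*i * (\<Prod>l=1..j. 2*i-1+l)) ((2*i-1) * (\<Prod>l=1..j. 2*i-2+l))
                    (Code_it j (2*i) (Bi i) :: 'a list set) (snd (Basis_it j (2*i) (Bi i))))"
proof (intro conjI allI impI)
  have c0: "(2*i-1 + 1) * 1 \<le> (2*i-1) * (2*i-1)"
    using cond[OF assms, of 0] by simp
  have "is_code (2*i) (2*i-1) 1 (span_vecs (2*i) (Bi i :: 'a list list)) \<and>
        u_bounded (2*i) (2*i-1) (span_vecs (2*i) (Bi i :: 'a list list)) (Bi i)"
    by (rule to_code[OF Bi_good _ c0]) (use assms in auto)
  then show "is_code (2*i) (2*i-1) 1 (Ci i :: 'a::field list set)"
    "u_bounded (2*i) (2*i-1) (Ci i :: 'a list set) (Bi i)" by (auto simp: Ci_def)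
next
  fix j assume j: "1 \<le> j \<and> j \<le> 4*i^2 - 6*i + 1"
  note I = iter[OF assms, of j, where 'a='a]
  have "is_code (2*i * (\<Prod>l=1..j. 2*i-1+l)) (2*i-1+j) (\<Prod>l=1..j. 2*i-1+l)
      (span_vecs (2*i * (\<Prod>l=1..j. 2*i-1+l)) (snd (Basis_it j (2*i) (Bi i :: 'a list list)))) \<and>
    u_bounded (2*i * (\<Prod>l=1..j. 2*i-1+l)) ((2*i-1) * (\<Prod>l=1..j. 2*i-2+l))
      (span_vecs (2*i * (\<Prod>l=1..j. 2*i-1+l)) (snd (Basis_it j (2*i) (Bi i :: 'a list list))))
      (snd (Basis_it j (2*i) (Bi i)))"
    by (rule to_code[OF conjunct2[OF I] _ cond[OF assms]]) (use j assms in auto)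
  then show "is_code (2*i * (\<Prod>l=1..j. 2*i-1+l)) (2*i-1+j) (\<Prod>l=1..j. 2*i-1+l)
                    (Code_it j (2*i) (Bi i) :: 'a list set)"
    "u_bounded (2*i * (\<Prod>l=1..j. 2*i-1+l)) ((2*i-1) * (\<Prod>l=1..j. 2*i-2+l))
                    (Code_it j (2*i) (Bi i) :: 'a list set) (snd (Basis_it j (2*i) (Bi i)))"
    using conjunct1[OF I] j by (auto simp: Code_it_def)
qed

end
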